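(* Let $A\in\mathbb{R}^{n\times n}$ be Metzler, $J\in\mathbb{R}^{n\times n}$ be nonnegative and $\bar T>0$. The following statements are equivalent: (a) There exist $\lambda,\mu,\nu\in\mathbb{R}^n_{>0}$ such that $\lambda^\top Ax\le-\mu^\top x$ for all $x\in\mathbb{R}^n_{\ge0}$ and $\lambda^\top Je^{A\theta}x-\lambda^\top x\le-\nu^\top x$ for all $x\in\mathbb{R}^n_{\ge0}$ and all $\theta\ge\bar T$. (b) There exists $\lambda\in\mathbb{R}^n_{>0}$ such that $\lambda^\top A<0$ and $\lambda^\top Je^{A\theta}-\lambda^\top<0$ for all $\theta\ge\bar T$. (c) There exists $\lambda\in\mathbb{R}^n_{>0}$ such that $\lambda^\top A<0$ and $\lambda^\top Je^{A\bar T}-\lambda^\top<0$. (d) There exists $\lambda\in\mathbb{R}^n_{>0}$ with $\lambda^\top A<0$ and $\lambda^\top(Je^{A\bar T}-I_n)<0$ (a common linear copositive Lyapunov function for the pair $(A,Je^{A\bar T}-I_n)$). (e) $\ker\begin{bmatrix} I_n & -A & -(Je^{A\bar T}-I_n)\end{bmatrix}\cap\mathbb{R}^{3n}_{\ge0}=\{0\}$. (f) There exist a differentiable $\zeta:[0,\bar T]\to\mathbb{R}^n$ with $\zeta(\bar T)\in\mathbb{R}^n_{>0}$ and $\varepsilon>0$ such that $\zeta(\bar T)^\top A<0$, $\zeta(\tau)^\top A-\dot\zeta(\tau)^\top\le0$ for all $\tau\in[0,\bar T]$, and $\zeta(\bar T)^\top J-\zeta(0)^\top+\varepsilon\mathbf{1}_n^\top\le0$.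 (g) There exist a differentiable $\xi:[0,\bar T]\to\mathbb{R}^n$ with $\xi(0)\in\mathbb{R}^n_{>0}$ and $\varepsilon>0$ such that $\xi(0)^\top A<0$, $\xi(\tau)^\top A+\dot\xi(\tau)^\top\le0$ for all $\tau\in[0,\bar T]$, and $\xi(0)^\top J-\xi(\bar T)^\top+\varepsilon\mathbf{1}_n^\top\le0$. Moreover, if one of these statements holds, the impulsive system is asymptotically stable under minimum dwell-time $\bar T$.
   Context: Consider the linear impulsive system $\dot x(t)=Ax(t)$ for $t\neq t_k$, $x(t_k^+)=Jx(t_k)$, $x(t_0)=x_0$, where $x(t)\in\mathbb{R}^n$, $x(t^+):=\lim_{s\downarrow t}x(s)$, and the impulse times $\{t_k\}_{k\in\mathbb{N}}$ are strictly increasing with $t_k\to\infty$; $T_k:=t_{k+1}-t_k$. A matrix is Metzler if its off-diagonal entries are nonnegative and nonnegative if all entries are nonnegative. Vector inequalities are componentwise; $\mathbf{1}_n$ is the vector of ones. "Asymptotically stable under minimum dwell-time $\bar T$" means the zero solution is globally asymptotically stable for every impulse sequence with $\bar T\le T_k<\infty$ for all $k$. *)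

theory Defs
  imports "HOL-Analysis.Analysis"
begin

definition metzler :: "real^'n^'n \<Rightarrow> bool" where
  "metzler A \<longleftrightarrow> (\<forall>i j. i \<noteq> j \<longrightarrow> 0 \<le> A $ i $ j)"

definition nonneg_matrix :: "real^'n^'n \<Rightarrow> bool" where
  "nonneg_matrix J \<longleftrightarrow> (\<forall>i j. 0 \<le> J $ i $ j)"

definition pos_vec :: "real^'n \<Rightarrow> bool" where
  "pos_vec v \<longleftrightarrow> (\<forall>i. 0 < v $ i)"

definition nonneg_vec :: "real^'n \<Rightarrow> bool" where
  "nonneg_vec v \<longleftrightarrow> (\<forall>i. 0 \<le> v $ i)"

definition mpow :: "real^'n^'n \<Rightarrow> nat \<Rightarrow> real^'n^'n" where
  "mpow M k = (((**) M) ^^ k) (mat 1)"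

definition mexp :: "real^'n^'n \<Rightarrow> real^'n^'n" where
  "mexp M = (\<Sum>k. (1 / fact k) *\<^sub>R mpow M k)"

text \<open>Solutions of the linear impulsive system x' = A x (t \<noteq> t_k), x(t_k^+) = J x(t_k),
  x(t0) = x0, on [t0, \<infinity>). Impulses occur at every t k, k = 0,1,2,... .
  On each interval (t_k, t_{k+1}] the solution is continuous (left-continuous at t_{k+1}),
  satisfies the ODE in the interior, and its right limit at t_k equals J x(t_k).\<close>

definition impulsive_solution ::
  "real^'n^'n \<Rightarrow> real^'n^'n \<Rightarrow> (nat \<Rightarrow> real) \<Rightarrow> real^'n \<Rightarrow> (real \<Rightarrow> real^'n) \<Rightarrow> bool" where
  "impulsive_solution A J t x0 x \<longleftrightarrow>
     x (t 0) = x0 \<and>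
     (\<forall>k. continuous_on {t k<..t (Suc k)} x) \<and>
     (\<forall>k. \<forall>s\<in>{t k<..<t (Suc k)}. (x has_vector_derivative (A *v x s)) (at s)) \<and>
     (\<forall>k. (x \<longlongrightarrow> J *v x (t k)) (at_right (t k)))"

definition dwell_admissible :: "real \<Rightarrow> (nat \<Rightarrow> real) \<Rightarrow> bool" where
  "dwell_admissible Tbar t \<longleftrightarrow>
     strict_mono t \<and> filterlim t at_top sequentially \<and> (\<forall>k. Tbar \<le> t (Suc k) - t k)"

definition GAS_impulsive :: "real^'n^'n \<Rightarrow> real^'n^'n \<Rightarrow> (nat \<Rightarrow> real) \<Rightarrow> bool" where
  "GAS_impulsive A J t \<longleftrightarrow>
     (\<forall>\<epsilon>>0. \<exists>\<delta>>0. \<forall>x0 x. norm x0 < \<delta> \<and> impulsive_solution A J t x0 x \<longrightarrow>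
         (\<forall>s\<ge>t 0. norm (x s) < \<epsilon>)) \<and>
     (\<forall>x0 x. impulsive_solution A J t x0 x \<longrightarrow> (x \<longlongrightarrow> 0) at_top)"

definition asymp_stable_min_dwell :: "real^'n^'n \<Rightarrow> real^'n^'n \<Rightarrow> real \<Rightarrow> bool" where
  "asymp_stable_min_dwell A J Tbar \<longleftrightarrow> (\<forall>t. dwell_admissible Tbar t \<longrightarrow> GAS_impulsive A J t)"

text \<open>The conditions (a)-(g). Row-vector products lambda^T M are written lambda v* M;
  vector inequalities are componentwise.\<close>

definition cond_a :: "real^'n^'n \<Rightarrow> real^'n^'n \<Rightarrow> real \<Rightarrow> bool" where
  "cond_a A J Tbar \<longleftrightarrow> (\<exists>lam mu nu. pos_vec lam \<and> pos_vec mu \<and> pos_vec nu \<and>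
     (\<forall>x. nonneg_vec x \<longrightarrow> lam \<bullet> (A *v x) \<le> - (mu \<bullet> x)) \<and>
     (\<forall>x \<theta>. nonneg_vec x \<and> \<theta> \<ge> Tbar \<longrightarrow>
         lam \<bullet> ((J ** mexp (\<theta> *\<^sub>R A)) *v x) - lam \<bullet> x \<le> - (nu \<bullet> x)))"

definition cond_b :: "real^'n^'n \<Rightarrow> real^'n^'n \<Rightarrow> real \<Rightarrow> bool" where
  "cond_b A J Tbar \<longleftrightarrow> (\<exists>lam. pos_vec lam \<and> (\<forall>j. (lam v* A) $ j < 0) \<and>
     (\<forall>\<theta>\<ge>Tbar. \<forall>j. (lam v* (J ** mexp (\<theta> *\<^sub>R A))) $ j - lam $ j < 0))"

definition cond_c :: "real^'n^'n \<Rightarrow> real^'n^'n \<Rightarrow> real \<Rightarrow> bool" where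
  "cond_c A J Tbar \<longleftrightarrow> (\<exists>lam. pos_vec lam \<and> (\<forall>j. (lam v* A) $ j < 0) \<and>
     (\<forall>j. (lam v* (J ** mexp (Tbar *\<^sub>R A))) $ j - lam $ j < 0))"

definition cond_d :: "real^'n^'n \<Rightarrow> real^'n^'n \<Rightarrow> real \<Rightarrow> bool" where
  "cond_d A J Tbar \<longleftrightarrow> (\<exists>lam. pos_vec lam \<and> (\<forall>j. (lam v* A) $ j < 0) \<and>
     (\<forall>j. (lam v* (J ** mexp (Tbar *\<^sub>R A) - mat 1)) $ j < 0))"

text \<open>(e): the kernel of the n x 3n block matrix [I, -A, -(J e^{A Tbar} - I)] meets the
  nonnegative orthant only at 0; a vector of R^{3n} is written as a triple (u,v,w) of
  vectors in R^n.\<close>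

definition cond_e :: "real^'n^'n \<Rightarrow> real^'n^'n \<Rightarrow> real \<Rightarrow> bool" where
  "cond_e A J Tbar \<longleftrightarrow> (\<forall>u v w. nonneg_vec u \<and> nonneg_vec v \<and> nonneg_vec w \<and>
     u - A *v v - (J ** mexp (Tbar *\<^sub>R A) - mat 1) *v w = 0 \<longrightarrow>
     u = 0 \<and> v = 0 \<and> w = 0)"

definition cond_f :: "real^'n^'n \<Rightarrow> real^'n^'n \<Rightarrow> real \<Rightarrow> bool" where
  "cond_f A J Tbar \<longleftrightarrow> (\<exists>(\<zeta>::real \<Rightarrow> real^'n) \<zeta>' \<epsilon>.
     (\<forall>\<tau>\<in>{0..Tbar}. (\<zeta> has_vector_derivative \<zeta>' \<tau>) (at \<tau> within {0..Tbar})) \<and>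
     pos_vec (\<zeta> Tbar) \<and> \<epsilon> > 0 \<and>
     (\<forall>j. (\<zeta> Tbar v* A) $ j < 0) \<and>
     (\<forall>\<tau>\<in>{0..Tbar}. \<forall>j. (\<zeta> \<tau> v* A) $ j - \<zeta>' \<tau> $ j \<le> 0) \<and>
     (\<forall>j. (\<zeta> Tbar v* J) $ j - \<zeta> 0 $ j + \<epsilon> \<le> 0))"

definition cond_g :: "real^'n^'n \<Rightarrow> real^'n^'n \<Rightarrow> real \<Rightarrow> bool" where
  "cond_g A J Tbar \<longleftrightarrow> (\<exists>(\<xi>::real \<Rightarrow> real^'n) \<xi>' \<epsilon>.
     (\<forall>\<tau>\<in>{0..Tbar}. (\<xi> has_vector_derivative \<xi>' \<tau>) (at \<tau> within {0..Tbar})) \<and>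
     pos_vec (\<xi> 0) \<and> \<epsilon> > 0 \<and>
     (\<forall>j. (\<xi> 0 v* A) $ j < 0) \<and>
     (\<forall>\<tau>\<in>{0..Tbar}. \<forall>j. (\<xi> \<tau> v* A) $ j + \<xi>' \<tau> $ j \<le> 0) \<and>
     (\<forall>j. (\<xi> 0 v* J) $ j - \<xi> Tbar $ j + \<epsilon> \<le> 0))"

end

theory Submission
  imports Defs
begin


lemma mpow_0[simp]: "mpow M 0 = mat 1" by (simp add: mpow_def)
lemma mpow_Suc: "mpow M (Suc k) = M ** mpow M k" by (simp add: mpow_def)
lemma mpow_Suc': "mpow M (Suc k) = mpow M k ** M"
  by (induction k) (simp_all add: mpow_Suc matrix_mul_assoc matrix_mul_lid matrix_mul_rid)

lemma mat_scaleR_left: "(c *\<^sub>R A) ** (B::real^'n^'n) = c *\<^sub>R (A ** B)"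
  by (simp add: vec_eq_iff matrix_matrix_mult_def sum_distrib_left mult.assoc)

lemma mat_scaleR_right: "(A::real^'n^'n) ** (c *\<^sub>R B) = c *\<^sub>R (A ** B)"
  by (simp add: vec_eq_iff matrix_matrix_mult_def sum_distrib_left mult_ac)

lemma mpow_scaleR: "mpow (t *\<^sub>R M) k = t^k *\<^sub>R mpow M k"
  by (induction k) (simp_all add: mpow_Suc mat_scaleR_left mat_scaleR_right)

definition mn :: "real^'n^'n \<Rightarrow> real" where "mn M = (\<Sum>i\<in>UNIV. \<Sum>j\<in>UNIV. \<bar>M$i$j\<bar>)"

lemma row_le_mn: "(\<Sum>j\<in>UNIV. \<bar>M$i$j\<bar>) \<le> mn M"
  unfolding mn_def by (rule member_le_sum) (auto intro: sum_nonneg)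

lemma mn_nonneg: "0 \<le> mn M" unfolding mn_def by (auto intro: sum_nonneg)

lemma mpow_bound: "\<bar>mpow M k $ i $ j\<bar> \<le> mn M ^ k"
proof (induction k arbitrary: i j)
  case 0 then show ?case by (simp add: mat_def)
next
  case (Suc k)
  have "\<bar>mpow M (Suc k) $ i $ j\<bar> = \<bar>\<Sum>l\<in>UNIV. M$i$l * mpow M k $ l $ j\<bar>"
    by (simp add: mpow_Suc matrix_matrix_mult_def)
  also have "\<dots> \<le> (\<Sum>l\<in>UNIV. \<bar>M$i$l\<bar> * mn M ^ k)"
    by (rule order_trans[OF sum_abs]) (auto intro!: sum_mono mult_left_mono Suc simp: abs_mult)
  also have "\<dots> = (\<Sum>l\<in>UNIV. \<bar>M$i$l\<bar>) * mn M ^ k" by (simp add: sum_distrib_right)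
  also have "\<dots> \<le> mn M * mn M ^ k"
    by (rule mult_right_mono[OF row_le_mn]) (simp add: mn_nonneg)
  finally show ?case by simp
qed

lemma summable_entry: "summable (\<lambda>k. (1 / fact k * mpow M k $ i $ j) * t^k)"
proof (rule summable_comparison_test')
  show "summable (\<lambda>k. inverse (fact k) * (mn M * \<bar>t\<bar>)^k)" by (rule summable_exp)
  fix k :: nat
  have "norm ((1 / fact k * mpow M k $ i $ j) * t^k) = inverse (fact k) * (\<bar>mpow M k $ i $ j\<bar> * \<bar>t\<bar>^k)"
    by (simp add: abs_mult power_abs field_simps)
  also have "\<dots> \<le> inverse (fact k) * (mn M ^ k * \<bar>t\<bar>^k)"
    by (intro mult_left_mono mult_right_mono mpow_bound) auto
  finally show "norm ((1 / fact k * mpow M k $ i $ j) * t^k) \<le> inverse (fact k) * (mn M * \<bar>t\<bar>)^k"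
    by (simp add: power_mult_distrib)
qed

lemma vec_sums_iff:
  fixes f :: "nat \<Rightarrow> 'a::real_normed_vector^'n"
  shows "f sums s \<longleftrightarrow> (\<forall>i. (\<lambda>k. f k $ i) sums (s $ i))"
proof
  assume "f sums s"
  then have "(\<lambda>n. (\<Sum>k<n. f k) $ i) \<longlonglongrightarrow> s $ i" for i
    unfolding sums_def by (intro tendsto_vec_nth)
  then show "\<forall>i. (\<lambda>k. f k $ i) sums (s $ i)" by (simp add: sums_def sum_component)
next
  assume a: "\<forall>i. (\<lambda>k. f k $ i) sums (s $ i)"
  have "(\<lambda>n. (\<chi> i. (\<Sum>k<n. f k $ i))) \<longlonglongrightarrow> (\<chi> i. s $ i)"
    by (rule tendsto_vec_lambda) (use a in \<open>simp add: sums_def\<close>)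
  moreover have "(\<lambda>n. (\<chi> i. (\<Sum>k<n. f k $ i))) = (\<lambda>n. \<Sum>k<n. f k)"
    by (rule ext) (simp add: vec_eq_iff sum_component)
  ultimately show "f sums s" by (simp add: sums_def)
qed

lemma mexp_entry: "(\<lambda>k. 1 / fact k * mpow M k $ i $ j) sums (mexp M $ i $ j)"
proof -
  let ?f = "\<lambda>k. (1 / fact k) *\<^sub>R mpow M k"
  have s: "summable (\<lambda>k. 1 / fact k * mpow M k $ i $ j)" for i j
    using summable_entry[of M i j 1] by simp
  have "?f sums (\<chi> i j. \<Sum>k. 1 / fact k * mpow M k $ i $ j)"
    unfolding vec_sums_iff using s by (simp add: summable_sums)
  then have "mexp M = (\<chi> i j. \<Sum>k. 1 / fact k * mpow M k $ i $ j)"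
    unfolding mexp_def by (simp add: sums_iff)
  then show ?thesis using summable_sums[OF s[of i j]] by simp
qed

definition cf :: "real^'n^'n \<Rightarrow> 'n \<Rightarrow> 'n \<Rightarrow> nat \<Rightarrow> real" where
  "cf M i j k = 1 / fact k * mpow M k $ i $ j"

lemma summable_cf: "summable (\<lambda>k. cf M i j k * t^k)"
  using summable_entry[of M i j t] unfolding cf_def .

lemma mexp_t_entry: "mexp (t *\<^sub>R M) $ i $ j = (\<Sum>k. cf M i j k * t^k)"
proof -
  have "(\<lambda>k. cf M i j k * t^k) sums (mexp (t *\<^sub>R M) $ i $ j)"
    using mexp_entry[of "t *\<^sub>R M" i j] by (simp add: mpow_scaleR cf_def mult_ac)
  then show ?thesis by (simp add: sums_iff)
qed

lemma mexp_right: "(mexp (t *\<^sub>R M) ** M) $ i $ j = (\<Sum>n. (1 / fact n * mpow M (Suc n) $ i $ j) * t^n)"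
proof -
  have "(mexp (t *\<^sub>R M) ** M) $ i $ j = (\<Sum>l\<in>UNIV. (\<Sum>n. cf M i l n * t^n) * M$l$j)"
    by (simp add: matrix_matrix_mult_def mexp_t_entry)
  also have "\<dots> = (\<Sum>l\<in>UNIV. (\<Sum>n. cf M i l n * t^n * M$l$j))"
    by (intro sum.cong refl) (rule suminf_mult2[OF summable_cf])
  also have "\<dots> = (\<Sum>n. \<Sum>l\<in>UNIV. cf M i l n * t^n * M$l$j)"
    by (rule suminf_sum[symmetric]) (auto intro!: summable_mult2 summable_cf)
  also have "\<dots> = (\<Sum>n. (1 / fact n * mpow M (Suc n) $ i $ j) * t^n)"
    by (intro suminf_cong) (simp add: cf_def mpow_Suc' matrix_matrix_mult_def sum_distrib_left sum_distrib_right mult_ac)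
  finally show ?thesis .
qed

lemma mexp_left: "(M ** mexp (t *\<^sub>R M)) $ i $ j = (\<Sum>n. (1 / fact n * mpow M (Suc n) $ i $ j) * t^n)"
proof -
  have "(M ** mexp (t *\<^sub>R M)) $ i $ j = (\<Sum>l\<in>UNIV. M$i$l * (\<Sum>n. cf M l j n * t^n))"
    by (simp add: matrix_matrix_mult_def mexp_t_entry)
  also have "\<dots> = (\<Sum>l\<in>UNIV. (\<Sum>n. M$i$l * (cf M l j n * t^n)))"
    by (intro sum.cong refl suminf_mult[symmetric] summable_cf)
  also have "\<dots> = (\<Sum>n. \<Sum>l\<in>UNIV. M$i$l * (cf M l j n * t^n))"
    by (rule suminf_sum[symmetric]) (auto intro!: summable_mult summable_cf)
  also have "\<dots> = (\<Sum>n. (1 / fact n * mpow M (Suc n) $ i $ j) * t^n)"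
    by (intro suminf_cong) (simp add: cf_def mpow_Suc matrix_matrix_mult_def sum_distrib_left sum_distrib_right mult_ac)
  finally show ?thesis .
qed

lemma mexp_comm: "mexp (t *\<^sub>R M) ** M = M ** mexp (t *\<^sub>R M)"
  by (simp add: vec_eq_iff mexp_left mexp_right)

lemma mexp_deriv: "((\<lambda>t. mexp (t *\<^sub>R M) $ i $ j) has_real_derivative (mexp (t *\<^sub>R M) ** M) $ i $ j) (at t)"
proof -
  have "((\<lambda>t. \<Sum>k. cf M i j k * t^k) has_real_derivative (\<Sum>n. diffs (cf M i j) n * t^n)) (at t)"
    by (rule termdiffs_strong_converges_everywhere) (rule summable_cf)
  moreover have "(\<Sum>n. diffs (cf M i j) n * t^n) = (mexp (t *\<^sub>R M) ** M) $ i $ j"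
    unfolding mexp_right diffs_def cf_def
  proof (intro suminf_cong)
    fix n
    have fs: "real (Suc n) * (1 / fact (Suc n)) = (1 / fact n :: real)"
      by (simp add: field_simps del: of_nat_Suc)
    then show "of_nat (Suc n) * (1 / fact (Suc n) * mpow M (Suc n) $ i $ j) * t ^ n =
      1 / fact n * mpow M (Suc n) $ i $ j * t ^ n"
      by (simp only: mult.assoc[symmetric] fs)
  qed
  ultimately show ?thesis by (simp add: mexp_t_entry)
qed

lemma mexp_zero: "mexp (0 *\<^sub>R M) = mat 1"
proof -
  have "mexp (0 *\<^sub>R M) $ i $ j = mat 1 $ i $ j" for i j
    unfolding mexp_t_entry using powser_zero[of "cf M i j"] by (simp add: cf_def)
  then show ?thesis by (simp add: vec_eq_iff)
qed



lemma dmult: "(f has_real_derivative a) (at x) \<Longrightarrow> (g has_real_derivative b) (at x) \<Longrightarrow>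
  ((\<lambda>x. f x * g x) has_real_derivative a * g x + f x * b) (at x)"
  using DERIV_mult[of f a x UNIV g b] by (simp add: mult.commute)

lemma prod_const:
  fixes P Q P' Q' :: "real \<Rightarrow> real^'n^'n"
  assumes dP: "\<And>r i j. ((\<lambda>r. P r $ i $ j) has_real_derivative P' r $ i $ j) (at r)"
    and dQ: "\<And>r i j. ((\<lambda>r. Q r $ i $ j) has_real_derivative Q' r $ i $ j) (at r)"
    and z: "\<And>r i j. (P' r ** Q r) $ i $ j + (P r ** Q' r) $ i $ j = 0"
  shows "P a ** Q a = P b ** Q b"
proof -
  have "(P a ** Q a) $ i $ j = (P b ** Q b) $ i $ j" for i j
  proof -
    have "((\<lambda>r. \<Sum>l\<in>UNIV. P r $ i $ l * Q r $ l $ j) has_real_derivative 0) (at r)" for r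
    proof -
      have "((\<lambda>r. \<Sum>l\<in>UNIV. P r $ i $ l * Q r $ l $ j) has_real_derivative
          (\<Sum>l\<in>UNIV. P' r $ i $ l * Q r $ l $ j + P r $ i $ l * Q' r $ l $ j)) (at r)"
        by (intro DERIV_sum dmult dP dQ)
      moreover have "(\<Sum>l\<in>UNIV. P' r $ i $ l * Q r $ l $ j + P r $ i $ l * Q' r $ l $ j) = 0"
        using z[of r i j] by (simp add: matrix_matrix_mult_def sum.distrib)
      ultimately show ?thesis by simp
    qed
    then show ?thesis
      using DERIV_isconst_all[of "\<lambda>r. \<Sum>l\<in>UNIV. P r $ i $ l * Q r $ l $ j" a b]
      by (simp add: matrix_matrix_mult_def)
  qed
  then show ?thesis by (simp add: vec_eq_iff)
qed

lemma mneg: "(A::real^'n^'n) ** (- B) = - (A ** B)"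
  by (simp add: vec_eq_iff matrix_matrix_mult_def sum_negf)

lemma E_deriv_lin:
  "((\<lambda>r. mexp ((a + c * r) *\<^sub>R M) $ i $ j) has_real_derivative
     c * (mexp ((a + c * r) *\<^sub>R M) ** M) $ i $ j) (at r)"
proof -
  have "((\<lambda>r. a + c * r) has_real_derivative c) (at r)"
    by (auto intro!: derivative_eq_intros)
  from DERIV_chain2[OF mexp_deriv this] show ?thesis by (simp add: mult.commute)
qed

lemma E_add: "mexp ((s + t) *\<^sub>R M) = mexp (s *\<^sub>R M) ** mexp (t *\<^sub>R M)"
proof -
  let ?P = "\<lambda>r. mexp ((s + 1 * r) *\<^sub>R M)"
  let ?Q = "\<lambda>r. mexp ((t + (-1) * r) *\<^sub>R M)"
  have "?P 0 ** ?Q 0 = ?P t ** ?Q t"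
  proof (rule prod_const)
    show "((\<lambda>r. ?P r $ i $ j) has_real_derivative (?P r ** M) $ i $ j) (at r)" for r i j
      using E_deriv_lin[of s 1 M i j r] by simp
    show "((\<lambda>r. ?Q r $ i $ j) has_real_derivative (- (M ** ?Q r)) $ i $ j) (at r)" for r i j
      using E_deriv_lin[of t "-1" M i j r] by (simp add: mexp_comm)
    show "((?P r ** M) ** ?Q r) $ i $ j + (?P r ** - (M ** ?Q r)) $ i $ j = 0" for r i j
      by (simp add: matrix_mul_assoc mneg)
  qed
  then show ?thesis using mexp_zero[of M] by (simp add: matrix_mul_rid)
qed

lemma mpow_nonneg: "nonneg_matrix B \<Longrightarrow> 0 \<le> mpow B k $ i $ j"
proof (induction k arbitrary: i j)
  case 0 then show ?case by (simp add: mat_def)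
next
  case (Suc k) then show ?case
    by (auto simp: mpow_Suc matrix_matrix_mult_def nonneg_matrix_def intro!: sum_nonneg)
qed

lemma E_ge_id: assumes "nonneg_matrix B" "0 \<le> t"
  shows "mat 1 $ i $ j \<le> mexp (t *\<^sub>R B) $ i $ j"
proof -
  have "sum (\<lambda>k. cf B i j k * t^k) {0} \<le> (\<Sum>k. cf B i j k * t^k)"
    by (rule sum_le_suminf[OF summable_cf]) (use assms in \<open>auto simp: cf_def intro!: mpow_nonneg divide_nonneg_nonneg mult_nonneg_nonneg\<close>)
  then show ?thesis by (simp add: mexp_t_entry cf_def)
qed

lemma E_shift:
  fixes M :: "real^'n^'n"
  shows "mexp (t *\<^sub>R M) = exp (- c * t) *\<^sub>R mexp (t *\<^sub>R (M + c *\<^sub>R mat 1))"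
proof -
  let ?B = "M + c *\<^sub>R mat 1"
  let ?P = "\<lambda>r. exp (- c * r) *\<^sub>R mexp ((0 + 1 * r) *\<^sub>R ?B)"
  let ?Q = "\<lambda>r. mexp ((t + (-1) * r) *\<^sub>R M)"
  have "?P 0 ** ?Q 0 = ?P t ** ?Q t"
  proof (rule prod_const)
    show "((\<lambda>r. ?P r $ i $ j) has_real_derivative (?P r ** M) $ i $ j) (at r)" for r i j
    proof -
      have key: "(- c * exp (- c * r)) * X $ i $ j + exp (- c * r) * (1 * (X ** ?B) $ i $ j)
          = ((exp (- c * r) *\<^sub>R X) ** M) $ i $ j" for X :: "real^'n^'n"
        by (simp add: matrix_add_ldistrib mat_scaleR_right mat_scaleR_left matrix_mul_rid algebra_simps)
      have deriv: "((\<lambda>r. exp (- c * r) * mexp ((0 + 1 * r) *\<^sub>R ?B) $ i $ j) has_real_derivative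
        (- c * exp (- c * r)) * mexp ((0 + 1 * r) *\<^sub>R ?B) $ i $ j + exp (- c * r) * (1 * (mexp ((0 + 1 * r) *\<^sub>R ?B) ** ?B) $ i $ j)) (at r)"
        by (intro dmult E_deriv_lin) (auto intro!: derivative_eq_intros)
      have "((\<lambda>r. ?P r $ i $ j) has_real_derivative ((exp (- c * r) *\<^sub>R mexp ((0 + 1 * r) *\<^sub>R ?B)) ** M) $ i $ j) (at r)"
        using deriv unfolding key by simp
      then show ?thesis by simp
    qed
    show "((\<lambda>r. ?Q r $ i $ j) has_real_derivative (- (M ** ?Q r)) $ i $ j) (at r)" for r i j
      using E_deriv_lin[of t "-1" M i j r] by (simp add: mexp_comm)
    show "((?P r ** M) ** ?Q r) $ i $ j + (?P r ** - (M ** ?Q r)) $ i $ j = 0" for r i j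
      by (simp add: matrix_mul_assoc mneg)
  qed
  then show ?thesis using mexp_zero[of M] mexp_zero[of ?B] by (simp add: matrix_mul_rid matrix_mul_lid mat_scaleR_left)
qed

lemma E_nonneg:
  assumes "metzler M" "0 \<le> t"
  shows "0 \<le> mexp (t *\<^sub>R M) $ i $ j" and "0 < mexp (t *\<^sub>R M) $ i $ i"
proof -
  define c where "c = (\<Sum>i\<in>UNIV. \<bar>M $ i $ i\<bar>)"
  have ci: "\<bar>M $ i $ i\<bar> \<le> c" for i unfolding c_def by (rule member_le_sum) auto
  have B: "nonneg_matrix (M + c *\<^sub>R mat 1)"
    unfolding nonneg_matrix_def
  proof (intro allI)
    fix i j show "0 \<le> (M + c *\<^sub>R mat 1) $ i $ j"
      using assms(1) ci[of i] by (cases "i = j") (auto simp: metzler_def mat_def)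
  qed
  have e: "mexp (t *\<^sub>R M) $ i $ j = exp (- c * t) * mexp (t *\<^sub>R (M + c *\<^sub>R mat 1)) $ i $ j" for i j
    by (subst E_shift[of t M c]) simp
  show "0 \<le> mexp (t *\<^sub>R M) $ i $ j"
    unfolding e using E_ge_id[OF B assms(2), of i j]
    by (intro mult_nonneg_nonneg) (auto simp: mat_def split: if_splits)
  show "0 < mexp (t *\<^sub>R M) $ i $ i"
    unfolding e using E_ge_id[OF B assms(2), of i i]
    by (intro mult_pos_pos) (auto simp: mat_def)
qed



lemma vm_comp: "(x v* M) $ j = (\<Sum>i\<in>UNIV. x $ i * M $ i $ j)"
  by (simp add: vector_matrix_mult_def)

lemma vm_mono:
  fixes a b :: "real^'n" and M :: "real^'m^'n"
  assumes "\<And>i. a $ i \<le> b $ i" "\<And>i j. 0 \<le> M $ i $ j"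
  shows "(a v* M) $ j \<le> (b v* M) $ j"
  unfolding vm_comp by (rule sum_mono) (intro mult_right_mono assms)

lemma vm_scale: "((c *\<^sub>R x) v* M) $ j = c * (x v* M) $ j"
  by (simp add: vm_comp sum_distrib_left mult.assoc)

lemma vm_minus_id: "(x v* (M - mat 1)) $ j = (x v* M) $ j - x $ j" for x :: "real^'n"
proof -
  have "(x v* (M - mat 1)) $ j = (\<Sum>i\<in>UNIV. x $ i * M $ i $ j - (if i = j then x $ i else 0))"
    unfolding vm_comp by (intro sum.cong refl) (simp add: mat_def right_diff_distrib)
  also have "\<dots> = (\<Sum>i\<in>UNIV. x $ i * M $ i $ j) - (\<Sum>i\<in>UNIV. if i = j then x $ i else 0)"
    by (rule sum_subtractf)
  also have "\<dots> = (x v* M) $ j - x $ j" by (simp add: vm_comp)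
  finally show ?thesis .
qed

lemma inner_axis_mv: "x \<bullet> (M *v axis j 1) = (x v* M) $ j"
  by (simp add: dot_lmul_matrix[symmetric] inner_axis)

lemma E_zero: "mexp (0 *\<^sub>R M) = mat 1" by (rule mexp_zero)
lemma mexp_0[simp]: "mexp (0::real^'n^'n) = mat 1" using mexp_zero[of "0::real^'n^'n"] by simp

lemma row_E_le:
  assumes "metzler A" "\<And>j. (lam v* A) $ j \<le> 0" "0 \<le> s"
  shows "(lam v* mexp (s *\<^sub>R A)) $ j \<le> lam $ j"
proof -
  let ?g = "\<lambda>t. \<Sum>i\<in>UNIV. lam $ i * mexp (t *\<^sub>R A) $ i $ j"
  have "?g s \<le> ?g 0"
  proof (rule DERIV_nonpos_imp_nonincreasing[OF assms(3)])
    fix x assume x: "0 \<le> x" "x \<le> s"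
    have "(?g has_real_derivative (\<Sum>i\<in>UNIV. lam $ i * (mexp (x *\<^sub>R A) ** A) $ i $ j)) (at x)"
      by (intro DERIV_sum DERIV_cmult mexp_deriv)
    moreover have "(\<Sum>i\<in>UNIV. lam $ i * (mexp (x *\<^sub>R A) ** A) $ i $ j) = ((lam v* A) v* mexp (x *\<^sub>R A)) $ j"
      by (simp add: mexp_comm vector_matrix_mul_assoc flip: vm_comp)
    moreover have "((lam v* A) v* mexp (x *\<^sub>R A)) $ j \<le> (0 v* mexp (x *\<^sub>R A)) $ j"
      by (rule vm_mono) (use assms x E_nonneg in auto)
    ultimately show "\<exists>y. (?g has_real_derivative y) (at x) \<and> y \<le> 0" by auto
  qed
  moreover have "?g 0 = lam $ j"
  proof -
    have "?g 0 = (lam v* mexp (0 *\<^sub>R A)) $ j" by (simp only: vm_comp)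
    also have "\<dots> = lam $ j" by (simp only: E_zero vector_matrix_mul_rid)
    finally show ?thesis .
  qed
  ultimately show ?thesis by (simp add: vm_comp)
qed

lemma uniform_contr:
  assumes A: "metzler A" and J: "nonneg_matrix J" and lam: "pos_vec lam"
    and nA: "\<And>j. (lam v* A) $ j < 0"
    and c: "\<And>j. (lam v* (J ** mexp (T *\<^sub>R A))) $ j - lam $ j < 0"
  shows "\<exists>\<delta>>0. \<delta> \<le> 1 \<and> (\<forall>\<theta>\<ge>T. \<forall>j. (lam v* (J ** mexp (\<theta> *\<^sub>R A))) $ j \<le> (1 - \<delta>) * lam $ j)"
proof -
  define w where "w j = lam $ j - (lam v* (J ** mexp (T *\<^sub>R A))) $ j" for j
  define \<delta> where "\<delta> = min 1 (Min (range (\<lambda>j. w j / lam $ j)))"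
  have lp: "0 < lam $ j" for j using lam by (simp add: pos_vec_def)
  have wp: "0 < w j" for j using c[of j] by (simp add: w_def)
  have dpos: "0 < \<delta>" unfolding \<delta>_def using wp lp by (auto simp: Min_gr_iff)
  have dle: "\<delta> * lam $ j \<le> w j" for j
  proof -
    have "\<delta> \<le> w j / lam $ j" unfolding \<delta>_def by (rule min.coboundedI2) auto
    then show ?thesis using lp[of j] by (simp add: field_simps)
  qed
  have base: "(lam v* (J ** mexp (T *\<^sub>R A))) $ j \<le> (1 - \<delta>) * lam $ j" for j
    using dle[of j] by (simp add: w_def algebra_simps)
  have "(lam v* (J ** mexp (\<theta> *\<^sub>R A))) $ j \<le> (1 - \<delta>) * lam $ j" if th: "\<theta> \<ge> T" for \<theta> j
  proof -
    have "mexp (\<theta> *\<^sub>R A) = mexp (T *\<^sub>R A) ** mexp ((\<theta> - T) *\<^sub>R A)"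
      using E_add[of T "\<theta> - T" A] by simp
    then have "(lam v* (J ** mexp (\<theta> *\<^sub>R A))) $ j = ((lam v* (J ** mexp (T *\<^sub>R A))) v* mexp ((\<theta> - T) *\<^sub>R A)) $ j"
      by (simp add: vector_matrix_mul_assoc matrix_mul_assoc)
    also have "\<dots> \<le> (((1 - \<delta>) *\<^sub>R lam) v* mexp ((\<theta> - T) *\<^sub>R A)) $ j"
      by (rule vm_mono) (use base E_nonneg[OF A] th in auto)
    also have "\<dots> = (1 - \<delta>) * (lam v* mexp ((\<theta> - T) *\<^sub>R A)) $ j" by (rule vm_scale)
    also have "\<dots> \<le> (1 - \<delta>) * lam $ j"
      by (rule mult_left_mono[OF row_E_le[OF A]]) (use nA th dpos \<delta>_def in \<open>auto intro: less_imp_le\<close>)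
    finally show ?thesis .
  qed
  moreover have "\<delta> \<le> 1" unfolding \<delta>_def by simp
  ultimately show ?thesis using dpos by blast
qed

lemma c_imp_b:
  assumes "metzler A" "nonneg_matrix J" "cond_c A J T" shows "cond_b A J T"
proof -
  obtain lam where l: "pos_vec lam" "\<And>j. (lam v* A) $ j < 0"
    "\<And>j. (lam v* (J ** mexp (T *\<^sub>R A))) $ j - lam $ j < 0"
    using assms(3) unfolding cond_c_def by blast
  obtain \<delta> where d: "\<delta> > 0" "\<forall>\<theta>\<ge>T. \<forall>j. (lam v* (J ** mexp (\<theta> *\<^sub>R A))) $ j \<le> (1 - \<delta>) * lam $ j"
    using uniform_contr[OF assms(1,2) l] by blast
  have "(lam v* (J ** mexp (\<theta> *\<^sub>R A))) $ j - lam $ j < 0" if "\<theta> \<ge> T" for \<theta> j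
  proof -
    have "0 < \<delta> * lam $ j" using d(1) l(1) by (simp add: pos_vec_def)
    moreover have "(1 - \<delta>) * lam $ j = lam $ j - \<delta> * lam $ j" by (simp add: algebra_simps)
    moreover have "(lam v* (J ** mexp (\<theta> *\<^sub>R A))) $ j \<le> (1 - \<delta>) * lam $ j"
      using d(2) that by blast
    ultimately show ?thesis by linarith
  qed
  then show ?thesis unfolding cond_b_def using l by blast
qed

lemma b_imp_c: "cond_b A J T \<Longrightarrow> cond_c A J T"
  unfolding cond_b_def cond_c_def by blast

lemma c_imp_a:
  assumes "metzler A" "nonneg_matrix J" "cond_c A J T" shows "cond_a A J T"
proof -
  obtain lam where l: "pos_vec lam" "\<And>j. (lam v* A) $ j < 0"
    "\<And>j. (lam v* (J ** mexp (T *\<^sub>R A))) $ j - lam $ j < 0"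
    using assms(3) unfolding cond_c_def by blast
  obtain \<delta> where d: "\<delta> > 0" "\<forall>\<theta>\<ge>T. \<forall>j. (lam v* (J ** mexp (\<theta> *\<^sub>R A))) $ j \<le> (1 - \<delta>) * lam $ j"
    using uniform_contr[OF assms(1,2) l] by blast
  define mu where "mu = - (lam v* A)"
  define nu where "nu = \<delta> *\<^sub>R lam"
  have "pos_vec mu" using l(2) by (simp add: mu_def pos_vec_def)
  moreover have "pos_vec nu" using l(1) d(1) by (simp add: nu_def pos_vec_def)
  moreover have "lam \<bullet> (A *v x) \<le> - (mu \<bullet> x)" for x
    by (simp add: mu_def dot_lmul_matrix)
  moreover have "lam \<bullet> ((J ** mexp (\<theta> *\<^sub>R A)) *v x) - lam \<bullet> x \<le> - (nu \<bullet> x)"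
    if "nonneg_vec x" "\<theta> \<ge> T" for x \<theta>
  proof -
    have "lam \<bullet> ((J ** mexp (\<theta> *\<^sub>R A)) *v x) - lam \<bullet> x =
      (\<Sum>j\<in>UNIV. ((lam v* (J ** mexp (\<theta> *\<^sub>R A))) $ j - lam $ j) * x $ j)"
    proof -
      have "lam \<bullet> ((J ** mexp (\<theta> *\<^sub>R A)) *v x) = (lam v* (J ** mexp (\<theta> *\<^sub>R A))) \<bullet> x"
        by (simp add: dot_lmul_matrix)
      then show ?thesis by (simp add: inner_vec_def sum_subtractf left_diff_distrib)
    qed
    also have "\<dots> \<le> (\<Sum>j\<in>UNIV. (- \<delta> * lam $ j) * x $ j)"
      using d(2) that by (intro sum_mono mult_right_mono) (auto simp: nonneg_vec_def algebra_simps)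
    also have "\<dots> = - (nu \<bullet> x)"
      by (simp add: nu_def inner_vec_def sum_negf)
    finally show ?thesis .
  qed
  ultimately show ?thesis unfolding cond_a_def using l(1) by blast
qed

lemma a_imp_b:
  assumes "cond_a A J T" shows "cond_b A J T"
proof -
  obtain lam mu nu where l: "pos_vec lam" "pos_vec mu" "pos_vec nu"
    "\<forall>x. nonneg_vec x \<longrightarrow> lam \<bullet> (A *v x) \<le> - (mu \<bullet> x)"
    "\<forall>x \<theta>. nonneg_vec x \<and> \<theta> \<ge> T \<longrightarrow> lam \<bullet> ((J ** mexp (\<theta> *\<^sub>R A)) *v x) - lam \<bullet> x \<le> - (nu \<bullet> x)"
    using assms unfolding cond_a_def by blast
  have nn: "nonneg_vec (axis j (1::real))" for j by (simp add: nonneg_vec_def axis_def)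
  have "(lam v* A) $ j < 0" for j
  proof -
    have "lam \<bullet> (A *v axis j 1) \<le> - (mu \<bullet> axis j 1)" using l(4) nn[of j] by blast
    then have "(lam v* A) $ j \<le> - mu $ j" by (simp add: inner_axis_mv inner_axis)
    then show ?thesis using l(2) unfolding pos_vec_def by (metis neg_less_0_iff_less order_le_less_trans)
  qed
  moreover have "(lam v* (J ** mexp (\<theta> *\<^sub>R A))) $ j - lam $ j < 0" if "\<theta> \<ge> T" for \<theta> j
  proof -
    have "lam \<bullet> ((J ** mexp (\<theta> *\<^sub>R A)) *v axis j 1) - lam \<bullet> axis j 1 \<le> - (nu \<bullet> axis j 1)"
      using l(5) nn[of j] that by blast
    then have "(lam v* (J ** mexp (\<theta> *\<^sub>R A))) $ j - lam $ j \<le> - nu $ j" by (simp add: inner_axis_mv inner_axis)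
    then show ?thesis using l(3) unfolding pos_vec_def by (metis neg_less_0_iff_less order_le_less_trans)
  qed
  ultimately show ?thesis unfolding cond_b_def using l(1) by blast
qed

lemma c_iff_d: "cond_c A J T \<longleftrightarrow> cond_d A J T"
  unfolding cond_c_def cond_d_def by (simp add: vm_minus_id)



lemma d_imp_e:
  fixes A J :: "real^'n^'n"
  assumes "cond_d A J T" shows "cond_e A J T"
  unfolding cond_e_def
proof (intro allI impI)
  fix u v w :: "real^'n"
  let ?N = "J ** mexp (T *\<^sub>R A) - mat 1"
  assume h: "nonneg_vec u \<and> nonneg_vec v \<and> nonneg_vec w \<and> u - A *v v - ?N *v w = 0"
  obtain lam where l: "pos_vec lam" "\<And>j. (lam v* A) $ j < 0" "\<And>j. (lam v* ?N) $ j < 0"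
    using assms unfolding cond_d_def by blast
  have "lam \<bullet> (u - A *v v - ?N *v w) = 0" using h by simp
  then have "lam \<bullet> u - (lam v* A) \<bullet> v - (lam v* ?N) \<bullet> w = 0"
    by (simp add: inner_diff_right dot_lmul_matrix)
  then have s0: "(\<Sum>j\<in>UNIV. lam $ j * u $ j + (- (lam v* A) $ j) * v $ j + (- (lam v* ?N) $ j) * w $ j) = 0"
    by (simp add: inner_vec_def sum.distrib sum_negf sum_subtractf)
  have nn: "\<forall>j\<in>UNIV. 0 \<le> lam $ j * u $ j + (- (lam v* A) $ j) * v $ j + (- (lam v* ?N) $ j) * w $ j"
  proof
    fix j
    have "0 \<le> lam $ j * u $ j" using l(1) h by (intro mult_nonneg_nonneg) (auto simp: pos_vec_def nonneg_vec_def less_imp_le)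
    moreover have "0 \<le> (- (lam v* A) $ j) * v $ j" using l(2)[of j] h by (intro mult_nonneg_nonneg) (auto simp: nonneg_vec_def)
    moreover have "0 \<le> (- (lam v* ?N) $ j) * w $ j" using l(3)[of j] h by (intro mult_nonneg_nonneg) (auto simp: nonneg_vec_def)
    ultimately show "0 \<le> lam $ j * u $ j + (- (lam v* A) $ j) * v $ j + (- (lam v* ?N) $ j) * w $ j" by simp
  qed
  define F where "F j = lam $ j * u $ j + (- (lam v* A) $ j) * v $ j + (- (lam v* ?N) $ j) * w $ j" for j
  have s0': "sum F UNIV = 0" using s0 by (simp add: F_def)
  have nn': "0 \<le> F j" for j using nn by (simp add: F_def)
  have "\<forall>j\<in>UNIV. F j = 0" using sum_nonneg_eq_0_iff[of UNIV F] s0' nn' by simp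
  then have z: "lam $ j * u $ j + (- (lam v* A) $ j) * v $ j + (- (lam v* ?N) $ j) * w $ j = 0" for j
    by (simp add: F_def)
  have "u $ j = 0 \<and> v $ j = 0 \<and> w $ j = 0" for j
  proof -
    have a1: "0 \<le> lam $ j * u $ j" using l(1) h by (intro mult_nonneg_nonneg) (auto simp: pos_vec_def nonneg_vec_def less_imp_le)
    have a2: "0 \<le> (- (lam v* A) $ j) * v $ j" using l(2)[of j] h by (intro mult_nonneg_nonneg) (auto simp: nonneg_vec_def)
    have a3: "0 \<le> (- (lam v* ?N) $ j) * w $ j" using l(3)[of j] h by (intro mult_nonneg_nonneg) (auto simp: nonneg_vec_def)
    have "lam $ j * u $ j = 0" "(- (lam v* A) $ j) * v $ j = 0" "(- (lam v* ?N) $ j) * w $ j = 0"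
      using z[of j] a1 a2 a3 by linarith+
    moreover have "lam $ j \<noteq> 0" "(lam v* A) $ j \<noteq> 0" "(lam v* ?N) $ j \<noteq> 0"
      using l(1) l(2)[of j] l(3)[of j] by (auto simp: pos_vec_def dual_order.strict_implies_not_eq)
    ultimately show ?thesis by simp
  qed
  then show "u = 0 \<and> v = 0 \<and> w = 0" by (simp add: vec_eq_iff)
qed

lemma e_imp_d:
  fixes A J :: "real^'n^'n"
  assumes "cond_e A J T" shows "cond_d A J T"
proof -
  let ?N = "J ** mexp (T *\<^sub>R A) - mat 1"
  define tot :: "(real^'n) \<times> (real^'n) \<times> (real^'n) \<Rightarrow> real" where
    "tot p = (\<Sum>i\<in>UNIV. fst p $ i) + (\<Sum>i\<in>UNIV. fst (snd p) $ i) + (\<Sum>i\<in>UNIV. snd (snd p) $ i)" for p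
  define Sim where "Sim = {p. (\<forall>i. 0 \<le> fst p $ i) \<and> (\<forall>i. 0 \<le> fst (snd p) $ i) \<and> (\<forall>i. 0 \<le> snd (snd p) $ i) \<and> tot p = 1}"
  define f where "f p = - fst p + A *v fst (snd p) + ?N *v snd (snd p)" for p :: "(real^'n) \<times> (real^'n) \<times> (real^'n)"
  have lf: "linear f"
    unfolding f_def
    by (intro linearI) (simp_all add: matrix_vector_right_distrib algebra_simps matrix_vector_mult_scaleR)
  have tl: "tot (u *\<^sub>R p + v *\<^sub>R q) = u * tot p + v * tot q" for u v p q
    by (simp add: tot_def sum.distrib sum_distrib_left algebra_simps)
  have cSim: "convex Sim"
    unfolding convex_def
  proof (intro ballI allI impI)
    fix p q u v assume h: "p \<in> Sim" "q \<in> Sim" "0 \<le> (u::real)" "0 \<le> v" "u + v = 1"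
    then show "u *\<^sub>R p + v *\<^sub>R q \<in> Sim"
      unfolding Sim_def using tl[of u p v q] by (auto intro!: add_nonneg_nonneg mult_nonneg_nonneg)
  qed
  have ct: "continuous_on UNIV tot" unfolding tot_def[abs_def] by (intro continuous_intros)
  have eqS: "Sim = {p. \<forall>i. 0 \<le> fst p $ i} \<inter> {p. \<forall>i. 0 \<le> fst (snd p) $ i} \<inter> {p. \<forall>i. 0 \<le> snd (snd p) $ i} \<inter> {p. tot p = 1}"
    by (auto simp: Sim_def)
  have c1: "closed {p::(real^'n) \<times> (real^'n) \<times> (real^'n). \<forall>i. 0 \<le> fst p $ i}"
    by (intro closed_Collect_all closed_Collect_le continuous_on_const) (intro continuous_intros)
  have c2: "closed {p::(real^'n) \<times> (real^'n) \<times> (real^'n). \<forall>i. 0 \<le> fst (snd p) $ i}"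
    by (intro closed_Collect_all closed_Collect_le continuous_on_const) (intro continuous_intros)
  have c3: "closed {p::(real^'n) \<times> (real^'n) \<times> (real^'n). \<forall>i. 0 \<le> snd (snd p) $ i}"
    by (intro closed_Collect_all closed_Collect_le continuous_on_const) (intro continuous_intros)
  have c4: "closed {p. tot p = 1}"
    by (rule closed_Collect_eq[OF ct continuous_on_const])
  have clSim: "closed Sim" unfolding eqS by (intro closed_Int c1 c2 c3 c4)
  have bSim: "bounded Sim"
    unfolding bounded_iff
  proof (intro exI ballI)
    fix p assume p: "p \<in> Sim"
    obtain u v w where puvw: "p = (u, v, w)" by (cases p) auto
    have nn: "\<And>i. 0 \<le> u $ i" "\<And>i. 0 \<le> v $ i" "\<And>i. 0 \<le> w $ i" and t: "tot p = 1"
      using p by (auto simp: Sim_def puvw)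
    have su: "0 \<le> (\<Sum>i\<in>UNIV. u $ i)" "0 \<le> (\<Sum>i\<in>UNIV. v $ i)" "0 \<le> (\<Sum>i\<in>UNIV. w $ i)"
      using nn by (auto intro: sum_nonneg)
    have nu: "norm x \<le> (\<Sum>i\<in>UNIV. x $ i)" if "\<And>i. 0 \<le> x $ i" for x :: "real^'n"
      using norm_le_l1_cart[of x] that by simp
    have "norm p \<le> norm u + norm (v, w)" unfolding puvw by (rule norm_Pair_le)
    also have "\<dots> \<le> norm u + (norm v + norm w)" by (simp add: norm_Pair_le)
    also have "\<dots> \<le> (\<Sum>i\<in>UNIV. u $ i) + ((\<Sum>i\<in>UNIV. v $ i) + (\<Sum>i\<in>UNIV. w $ i))"
      using nu[of u] nu[of v] nu[of w] nn by (meson add_mono)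
    also have "\<dots> = 1" using t by (simp add: tot_def puvw)
    finally show "norm p \<le> 1" .
  qed
  have "compact Sim" using clSim bSim by (simp add: compact_eq_bounded_closed)
  moreover have "continuous_on Sim f"
    using lf by (intro linear_continuous_on) (simp add: linear_conv_bounded_linear)
  ultimately have clK: "closed (f ` Sim)" by (intro compact_imp_closed compact_continuous_image)
  have cK: "convex (f ` Sim)" by (rule convex_linear_image[OF lf cSim])
  have K0: "0 \<notin> f ` Sim"
  proof
    assume "0 \<in> f ` Sim"
    then obtain u v w where p: "(u, v, w) \<in> Sim" "f (u, v, w) = 0" by auto
    have "nonneg_vec u \<and> nonneg_vec v \<and> nonneg_vec w \<and> u - A *v v - ?N *v w = 0"
      using p by (auto simp: Sim_def nonneg_vec_def f_def algebra_simps)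
    then have "u = 0 \<and> v = 0 \<and> w = 0" using assms unfolding cond_e_def by blast
    then show False using p(1) by (simp add: Sim_def tot_def)
  qed
  obtain a b where ab: "0 < b" "\<forall>x\<in>f ` Sim. b < a \<bullet> x"
    using separating_hyperplane_closed_0[OF cK clK K0] by blast
  have ax: "(\<Sum>i\<in>UNIV. axis j (1::real) $ i) = 1" for j
    by (simp add: axis_def)
  have ax0: "\<forall>i. 0 \<le> axis j (1::real) $ i" for j by (simp add: axis_def)
  define lam where "lam = - a"
  have L1: "lam $ j > 0" for j
  proof -
    have "(axis j 1, 0, 0) \<in> Sim" using ax[of j] ax0[of j] by (simp add: Sim_def tot_def)
    then have "b < a \<bullet> f (axis j 1, 0, 0)" using ab by blast
    then show ?thesis using ab(1) by (simp add: f_def lam_def inner_axis)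
  qed
  have L2: "(lam v* A) $ j < 0" for j
  proof -
    have "(0, axis j 1, 0) \<in> Sim" using ax[of j] ax0[of j] by (simp add: Sim_def tot_def)
    then have "b < a \<bullet> f (0, axis j 1, 0)" using ab by blast
    then show ?thesis using ab(1) by (simp add: f_def lam_def inner_axis_mv[symmetric])
  qed
  have L3: "(lam v* ?N) $ j < 0" for j
  proof -
    have "(0, 0, axis j 1) \<in> Sim" using ax[of j] ax0[of j] by (simp add: Sim_def tot_def)
    then have "b < a \<bullet> f (0, 0, axis j 1)" using ab by blast
    then show ?thesis using ab(1) by (simp add: f_def lam_def inner_axis_mv[symmetric])
  qed
  show ?thesis unfolding cond_d_def pos_vec_def
    by (rule exI[of _ lam]) (simp add: L1 L2 L3)
qed



lemma basis_exp: "(\<Sum>i\<in>UNIV. (x $ i) *\<^sub>R axis i (1::real)) = (x::real^'n)"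
proof -
  have "(\<Sum>k\<in>UNIV. x $ k * (if i = k then 1 else 0)) = x $ i" for i
  proof -
    have "(\<Sum>k\<in>UNIV. x $ k * (if i = k then 1 else 0)) = (\<Sum>k\<in>UNIV. if i = k then x $ k else 0)"
      by (rule sum.cong) auto
    then show ?thesis by simp
  qed
  then show ?thesis by (simp add: vec_eq_iff sum_component axis_def)
qed

lemma vec_vderiv:
  fixes f :: "real \<Rightarrow> real^'n"
  assumes "\<And>i. ((\<lambda>x. f x $ i) has_real_derivative f' $ i) F"
  shows "(f has_vector_derivative f') F"
proof -
  have "((\<lambda>x. \<Sum>i\<in>UNIV. (f x $ i) *\<^sub>R axis i (1::real)) has_vector_derivative (\<Sum>i\<in>UNIV. (f' $ i) *\<^sub>R axis i 1)) F"
  proof (rule has_vector_derivative_sum)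
    fix i
    have "((\<lambda>x. f x $ i) has_vector_derivative f' $ i) F"
      using assms has_real_derivative_iff_has_vector_derivative by blast
    from bounded_linear.has_vector_derivative[OF bounded_linear_scaleR_left this]
    show "((\<lambda>x. (f x $ i) *\<^sub>R axis i 1) has_vector_derivative (f' $ i) *\<^sub>R axis i 1) F" .
  qed
  then show ?thesis by (simp add: basis_exp)
qed

lemma vec_comp_deriv:
  fixes f :: "real \<Rightarrow> real^'n"
  assumes "(f has_vector_derivative f') F"
  shows "((\<lambda>x. f x $ i) has_real_derivative f' $ i) F"
  using bounded_linear.has_vector_derivative[OF bounded_linear_vec_nth assms]
  by (simp add: has_real_derivative_iff_has_vector_derivative)

lemma vm_add: "((x + y) v* M) $ j = (x v* M) $ j + (y v* M) $ j" for x y :: "real^'n"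
  by (simp add: vm_comp algebra_simps sum.distrib)

lemma c_imp_f:
  fixes A J :: "real^'n^'n"
  assumes cc: "cond_c A J T"
  shows "cond_f A J T"
proof -
  obtain lam where l: "pos_vec lam" "\<And>j. (lam v* A) $ j < 0"
    "\<And>j. (lam v* (J ** mexp (T *\<^sub>R A))) $ j - lam $ j < 0"
    using cc unfolding cond_c_def by blast
  define w where "w = lam v* J"
  define v where "v = lam - lam v* (J ** mexp (T *\<^sub>R A))"
  have vp: "0 < v $ j" for j using l(3)[of j] by (simp add: v_def)
  define c where "c = (\<Sum>j\<in>UNIV. \<bar>(v v* A) $ j\<bar> / v $ j)"
  have cv: "(v v* A) $ j \<le> c * v $ j" for j
  proof -
    have "\<bar>(v v* A) $ j\<bar> / v $ j \<le> c"
      unfolding c_def by (rule member_le_sum) (use vp in \<open>auto intro!: divide_nonneg_pos\<close>)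
    then have "\<bar>(v v* A) $ j\<bar> \<le> c * v $ j" using vp[of j] by (simp add: field_simps)
    then show ?thesis by linarith
  qed
  define z where "z \<tau> = w v* mexp (\<tau> *\<^sub>R A) + exp (c * (\<tau> - T)) *\<^sub>R v" for \<tau>
  define z' where "z' \<tau> = w v* (mexp (\<tau> *\<^sub>R A) ** A) + (c * exp (c * (\<tau> - T))) *\<^sub>R v" for \<tau>
  define m where "m = Min (range (\<lambda>j. v $ j))"
  have mpos: "0 < m" unfolding m_def using vp by (auto simp: Min_gr_iff)
  have mle: "m \<le> v $ j" for j unfolding m_def by (rule Min_le) auto
  define \<epsilon> where "\<epsilon> = exp (- (c * T)) * m"
  have epos: "0 < \<epsilon>" unfolding \<epsilon>_def using mpos by simp
  have dz: "(z has_vector_derivative z' \<tau>) (at \<tau> within {0..T})" for \<tau>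
  proof (rule vec_vderiv)
    fix k
    have e: "((\<lambda>\<tau>. exp (c * (\<tau> - T)) * v $ k) has_real_derivative (c * exp (c * (\<tau> - T))) * v $ k) (at \<tau>)"
      by (auto intro!: derivative_eq_intros)
    have s: "((\<lambda>\<tau>. \<Sum>i\<in>UNIV. w $ i * mexp (\<tau> *\<^sub>R A) $ i $ k) has_real_derivative
        (\<Sum>i\<in>UNIV. w $ i * (mexp (\<tau> *\<^sub>R A) ** A) $ i $ k)) (at \<tau>)"
      by (intro DERIV_sum DERIV_cmult mexp_deriv)
    have "((\<lambda>\<tau>. z \<tau> $ k) has_real_derivative z' \<tau> $ k) (at \<tau>)"
      using DERIV_add[OF s e] by (simp add: z_def z'_def vm_comp)
    then show "((\<lambda>\<tau>. z \<tau> $ k) has_real_derivative z' \<tau> $ k) (at \<tau> within {0..T})"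
      by (rule has_field_derivative_at_within)
  qed
  have zT: "z T = lam" by (simp add: z_def w_def v_def vector_matrix_mul_assoc)
  have z0: "z 0 = w + exp (- (c * T)) *\<^sub>R v"
    by (simp add: z_def E_zero vector_matrix_mul_rid)
  have c1: "(z \<tau> v* A) $ j - z' \<tau> $ j \<le> 0" for \<tau> j
  proof -
    have "(z \<tau> v* A) $ j - z' \<tau> $ j = exp (c * (\<tau> - T)) * ((v v* A) $ j - c * v $ j)"
      by (simp add: z_def z'_def vm_add vm_scale vector_matrix_mul_assoc algebra_simps)
    also have "\<dots> \<le> 0" using cv[of j] by (simp add: mult_nonneg_nonpos)
    finally show ?thesis .
  qed
  have c2: "(z T v* J) $ j - z 0 $ j + \<epsilon> \<le> 0" for j
    using mle[of j] by (simp add: zT z0 w_def \<epsilon>_def)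
  show ?thesis unfolding cond_f_def
    apply (rule exI[of _ z], rule exI[of _ z'], rule exI[of _ \<epsilon>])
    using dz zT l(1) l(2) epos c1 c2 by auto
qed



lemma f_imp_c:
  fixes A J :: "real^'n^'n"
  assumes A: "metzler A" and Tp: "T > 0" and ff: "cond_f A J T"
  shows "cond_c A J T"
proof -
  obtain z z' \<epsilon> where dz: "\<forall>\<tau>\<in>{0..T}. (z has_vector_derivative z' \<tau>) (at \<tau> within {0..T})"
    and pz: "pos_vec (z T)" and ep: "\<epsilon> > 0" and nA: "\<forall>j. (z T v* A) $ j < 0"
    and mono: "\<forall>\<tau>\<in>{0..T}. \<forall>j. (z \<tau> v* A) $ j - z' \<tau> $ j \<le> 0"
    and jump: "\<forall>j. (z T v* J) $ j - z 0 $ j + \<epsilon> \<le> 0"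
    using ff unfolding cond_f_def by blast
  have cz: "continuous_on {0..T} z"
    using dz by (metis continuous_on_eq_continuous_within has_vector_derivative_continuous)
  have claim1: "(z 0 v* mexp (T *\<^sub>R A)) $ j \<le> z T $ j" for j
  proof -
    define \<phi> where "\<phi> \<tau> = (\<Sum>i\<in>UNIV. z \<tau> $ i * mexp ((T + (-1) * \<tau>) *\<^sub>R A) $ i $ j)" for \<tau>
    have cE: "continuous_on {0..T} (\<lambda>\<tau>. mexp ((T + (-1) * \<tau>) *\<^sub>R A) $ i $ j)" for i
      by (rule continuous_at_imp_continuous_on) (use E_deriv_lin DERIV_isCont in blast)
    have cphi: "continuous_on {0..T} \<phi>"
      unfolding \<phi>_def by (intro continuous_intros cz cE)
    have "\<phi> 0 \<le> \<phi> T"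
    proof (rule DERIV_nonneg_imp_increasing_open[OF less_imp_le[OF Tp] _ cphi])
      fix x assume x: "0 < x" "x < T"
      have dzx: "((\<lambda>\<tau>. z \<tau> $ i) has_real_derivative z' x $ i) (at x)" for i
      proof -
        have "(z has_vector_derivative z' x) (at x within {0..T})" using dz x by auto
        then have "(z has_vector_derivative z' x) (at x)" using at_within_Icc_at[OF x] by simp
        then show ?thesis by (rule vec_comp_deriv)
      qed
      let ?E = "mexp ((T + (-1) * x) *\<^sub>R A)"
      have "(\<phi> has_real_derivative (\<Sum>i\<in>UNIV. z' x $ i * ?E $ i $ j + z x $ i * (-1 * (?E ** A) $ i $ j))) (at x)"
        unfolding \<phi>_def by (intro DERIV_sum dmult dzx E_deriv_lin)
      moreover have "(\<Sum>i\<in>UNIV. z' x $ i * ?E $ i $ j + z x $ i * (-1 * (?E ** A) $ i $ j))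
          = (z' x v* ?E) $ j - ((z x v* A) v* ?E) $ j"
      proof -
        have "(?E ** A) = A ** ?E" by (rule mexp_comm)
        then have f1: "((z x v* A) v* ?E) $ j = (\<Sum>i\<in>UNIV. z x $ i * (?E ** A) $ i $ j)"
          by (simp add: vector_matrix_mul_assoc vm_comp)
        have f2: "(\<Sum>i\<in>UNIV. z' x $ i * ?E $ i $ j + z x $ i * (-1 * (?E ** A) $ i $ j))
          = (\<Sum>i\<in>UNIV. z' x $ i * ?E $ i $ j) - (\<Sum>i\<in>UNIV. z x $ i * (?E ** A) $ i $ j)"
          unfolding sum_subtractf[symmetric] by (rule sum.cong) simp_all
        show ?thesis unfolding f2 f1 by (simp only: vm_comp)
      qed
      moreover have "((z x v* A) v* ?E) $ j \<le> (z' x v* ?E) $ j"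
        by (rule vm_mono) (use mono x E_nonneg[OF A] in auto)
      ultimately show "\<exists>y. (\<phi> has_real_derivative y) (at x) \<and> 0 \<le> y" by auto
    qed
    moreover have "\<phi> 0 = (z 0 v* mexp (T *\<^sub>R A)) $ j" by (simp add: \<phi>_def vm_comp)
    moreover have "\<phi> T = (z T v* mat 1) $ j" unfolding \<phi>_def vm_comp by simp
    ultimately show ?thesis by (simp only: vector_matrix_mul_rid)
  qed
  define lam where "lam = z T"
  have "(lam v* (J ** mexp (T *\<^sub>R A))) $ j - lam $ j < 0" for j
  proof -
    let ?E = "mexp (T *\<^sub>R A)"
    define b where "b = (\<chi> i. z 0 $ i - \<epsilon>)"
    have "(lam v* (J ** ?E)) $ j = ((lam v* J) v* ?E) $ j" by (simp add: vector_matrix_mul_assoc)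
    also have "\<dots> \<le> (b v* ?E) $ j"
    proof (rule vm_mono)
      fix i show "(lam v* J) $ i \<le> b $ i" using spec[OF jump, of i] by (simp add: b_def lam_def)
    next
      fix i k show "0 \<le> ?E $ i $ k" using E_nonneg(1)[OF A less_imp_le[OF Tp]] .
    qed
    also have "\<dots> = (z 0 v* ?E) $ j - \<epsilon> * (\<Sum>i\<in>UNIV. ?E $ i $ j)"
      by (simp add: b_def vm_comp left_diff_distrib sum_subtractf sum_distrib_left)
    also have "\<dots> < lam $ j"
    proof -
      have "?E $ j $ j \<le> (\<Sum>i\<in>UNIV. ?E $ i $ j)"
        by (rule member_le_sum) (use E_nonneg[OF A] Tp in auto)
      moreover have "0 < ?E $ j $ j" using E_nonneg(2)[OF A] Tp by simp
      ultimately have "0 < \<epsilon> * (\<Sum>i\<in>UNIV. ?E $ i $ j)" using ep by simp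
      then show ?thesis using claim1[of j] by (simp add: lam_def)
    qed
    finally show ?thesis by simp
  qed
  then show ?thesis unfolding cond_c_def lam_def using pz nA by blast
qed

lemma img_refl: "(\<lambda>\<tau>. T - \<tau>) ` {0..T} = {0..(T::real)}"
proof
  show "(\<lambda>\<tau>. T - \<tau>) ` {0..T} \<subseteq> {0..T}" by auto
  show "{0..T} \<subseteq> (\<lambda>\<tau>. T - \<tau>) ` {0..T}"
  proof
    fix x assume "x \<in> {0..T}"
    then show "x \<in> (\<lambda>\<tau>. T - \<tau>) ` {0..T}" by (intro image_eqI[of _ _ "T - x"]) auto
  qed
qed

lemma reflect_deriv:
  fixes g :: "real \<Rightarrow> real^'n"
  assumes "\<forall>\<tau>\<in>{0..T}. (g has_vector_derivative g' \<tau>) (at \<tau> within {0..T})"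
  shows "\<forall>\<tau>\<in>{0..T}. ((\<lambda>\<tau>. g (T - \<tau>)) has_vector_derivative - g' (T - \<tau>)) (at \<tau> within {0..T})"
proof
  fix \<tau> assume t: "\<tau> \<in> {0..T}"
  have d1: "((\<lambda>\<tau>. T - \<tau>) has_vector_derivative -1) (at \<tau> within {0..T})"
    using has_vector_derivative_diff[OF has_vector_derivative_const has_vector_derivative_id, of T "at \<tau> within {0..T}"]
    by simp
  have "T - \<tau> \<in> {0..T}" using t by auto
  then have d2: "(g has_vector_derivative g' (T - \<tau>)) (at ((\<lambda>\<tau>. T - \<tau>) \<tau>) within (\<lambda>\<tau>. T - \<tau>) ` {0..T})"
    using assms by (simp add: img_refl)
  from vector_diff_chain_within[OF d1 d2]
  show "((\<lambda>\<tau>. g (T - \<tau>)) has_vector_derivative - g' (T - \<tau>)) (at \<tau> within {0..T})"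
    by (simp add: o_def)
qed

lemma f_imp_g:
  assumes "cond_f A J T" shows "cond_g A J T"
proof -
  obtain z z' \<epsilon> where dz: "\<forall>\<tau>\<in>{0..T}. (z has_vector_derivative z' \<tau>) (at \<tau> within {0..T})"
    and pz: "pos_vec (z T)" and ep: "\<epsilon> > 0" and nA: "\<forall>j. (z T v* A) $ j < 0"
    and mono: "\<forall>\<tau>\<in>{0..T}. \<forall>j. (z \<tau> v* A) $ j - z' \<tau> $ j \<le> 0"
    and jump: "\<forall>j. (z T v* J) $ j - z 0 $ j + \<epsilon> \<le> 0"
    using assms unfolding cond_f_def by blast
  have d: "\<forall>\<tau>\<in>{0..T}. ((\<lambda>\<tau>. z (T - \<tau>)) has_vector_derivative - z' (T - \<tau>)) (at \<tau> within {0..T})"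
    by (rule reflect_deriv[OF dz])
  have m: "\<forall>\<tau>\<in>{0..T}. \<forall>j. ((\<lambda>\<tau>. z (T - \<tau>)) \<tau> v* A) $ j + (- z' (T - \<tau>)) $ j \<le> 0"
    using mono by auto
  show ?thesis unfolding cond_g_def
    apply (rule exI[of _ "\<lambda>\<tau>. z (T - \<tau>)"], rule exI[of _ "\<lambda>\<tau>. - z' (T - \<tau>)"], rule exI[of _ \<epsilon>])
    using d m pz ep nA jump by auto
qed

lemma g_imp_f:
  assumes "cond_g A J T" shows "cond_f A J T"
proof -
  obtain z z' \<epsilon> where dz: "\<forall>\<tau>\<in>{0..T}. (z has_vector_derivative z' \<tau>) (at \<tau> within {0..T})"
    and pz: "pos_vec (z 0)" and ep: "\<epsilon> > 0" and nA: "\<forall>j. (z 0 v* A) $ j < 0"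
    and mono: "\<forall>\<tau>\<in>{0..T}. \<forall>j. (z \<tau> v* A) $ j + z' \<tau> $ j \<le> 0"
    and jump: "\<forall>j. (z 0 v* J) $ j - z T $ j + \<epsilon> \<le> 0"
    using assms unfolding cond_g_def by blast
  have d: "\<forall>\<tau>\<in>{0..T}. ((\<lambda>\<tau>. z (T - \<tau>)) has_vector_derivative - z' (T - \<tau>)) (at \<tau> within {0..T})"
    by (rule reflect_deriv[OF dz])
  have m: "\<forall>\<tau>\<in>{0..T}. \<forall>j. ((\<lambda>\<tau>. z (T - \<tau>)) \<tau> v* A) $ j - (- z' (T - \<tau>)) $ j \<le> 0"
    using mono by auto
  show ?thesis unfolding cond_f_def
    apply (rule exI[of _ "\<lambda>\<tau>. z (T - \<tau>)"], rule exI[of _ "\<lambda>\<tau>. - z' (T - \<tau>)"], rule exI[of _ \<epsilon>])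
    using d m pz ep nA jump by auto
qed



lemma mv_comp: "(M *v y) $ i = (\<Sum>j\<in>UNIV. M $ i $ j * y $ j)"
  by (simp add: matrix_vector_mult_def)

lemma E_cont_on: "continuous_on S (\<lambda>r. mexp ((a + c * r) *\<^sub>R A) $ i $ j)"
  by (rule continuous_at_imp_continuous_on) (use E_deriv_lin DERIV_isCont in blast)

lemma sol_formula:
  fixes A J :: "real^'n^'n" and x :: "real \<Rightarrow> real^'n"
  assumes sol: "impulsive_solution A J t x0 x" and tk: "t k < s" "s \<le> t (Suc k)"
  shows "x s = mexp ((s - t k) *\<^sub>R A) *v (J *v x (t k))"
proof -
  have cont: "continuous_on {t k<..t (Suc k)} x"
    and der: "\<forall>r\<in>{t k<..<t (Suc k)}. (x has_vector_derivative (A *v x r)) (at r)"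
    and lim: "(x \<longlongrightarrow> J *v x (t k)) (at_right (t k))"
    using sol unfolding impulsive_solution_def by auto
  have "x s $ i = (mexp ((s - t k) *\<^sub>R A) *v (J *v x (t k))) $ i" for i
  proof -
    define g where "g r = (\<Sum>l\<in>UNIV. mexp ((s + (-1) * r) *\<^sub>R A) $ i $ l * x r $ l)" for r
    have eq: "g r0 = x s $ i" if r0: "t k < r0" "r0 < s" for r0
    proof -
      have "g s = g r0"
      proof (rule DERIV_isconst_end[OF r0(2)])
        have "continuous_on {r0..s} x"
          by (rule continuous_on_subset[OF cont]) (use r0 tk in auto)
        then show "continuous_on {r0..s} g"
          unfolding g_def by (intro continuous_intros E_cont_on)
      next
        fix r assume r: "r0 < r" "r < s"
        let ?E = "mexp ((s + (-1) * r) *\<^sub>R A)"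
        have "(x has_vector_derivative (A *v x r)) (at r)" using der r r0 tk by auto
        then have dx: "((\<lambda>r. x r $ l) has_real_derivative (A *v x r) $ l) (at r)" for l
          by (rule vec_comp_deriv)
        have "(g has_real_derivative (\<Sum>l\<in>UNIV. (-1 * (?E ** A) $ i $ l) * x r $ l + ?E $ i $ l * (A *v x r) $ l)) (at r)"
          unfolding g_def by (intro DERIV_sum dmult dx E_deriv_lin)
        moreover have "(\<Sum>l\<in>UNIV. (-1 * (?E ** A) $ i $ l) * x r $ l + ?E $ i $ l * (A *v x r) $ l) = 0"
        proof -
          have s1: "(\<Sum>l\<in>UNIV. (-1 * (?E ** A) $ i $ l) * x r $ l) = - (((?E ** A) *v x r) $ i)"
            by (simp add: mv_comp sum_negf)
          have "((?E ** A) *v x r) $ i = (?E *v (A *v x r)) $ i" by (simp only: matrix_vector_mul_assoc)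
          also have "\<dots> = (\<Sum>l\<in>UNIV. ?E $ i $ l * (A *v x r) $ l)" by (rule mv_comp)
          finally have s2: "(\<Sum>l\<in>UNIV. ?E $ i $ l * (A *v x r) $ l) = ((?E ** A) *v x r) $ i" by simp
          have "(\<Sum>l\<in>UNIV. (-1 * (?E ** A) $ i $ l) * x r $ l + ?E $ i $ l * (A *v x r) $ l)
            = (\<Sum>l\<in>UNIV. (-1 * (?E ** A) $ i $ l) * x r $ l) + (\<Sum>l\<in>UNIV. ?E $ i $ l * (A *v x r) $ l)"
            by (rule sum.distrib)
          also have "\<dots> = - (((?E ** A) *v x r) $ i) + ((?E ** A) *v x r) $ i" by (simp only: s1 s2)
          finally show ?thesis by simp
        qed
        ultimately show "(g has_real_derivative 0) (at r)" by simp
      qed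
      moreover have "g s = x s $ i"
        unfolding g_def by (simp flip: mv_comp)
      ultimately show ?thesis by simp
    qed
    have "(g \<longlongrightarrow> (\<Sum>l\<in>UNIV. mexp ((s + (-1) * t k) *\<^sub>R A) $ i $ l * (J *v x (t k)) $ l)) (at_right (t k))"
      unfolding g_def
    proof (intro tendsto_sum tendsto_mult)
      fix l
      show "((\<lambda>r. x r $ l) \<longlongrightarrow> (J *v x (t k)) $ l) (at_right (t k))"
        by (intro tendsto_vec_nth lim)
      have "isCont (\<lambda>r. mexp ((s + (-1) * r) *\<^sub>R A) $ i $ l) (t k)"
        using E_deriv_lin DERIV_isCont by blast
      then have "((\<lambda>r. mexp ((s + (-1) * r) *\<^sub>R A) $ i $ l) \<longlongrightarrow> mexp ((s + (-1) * t k) *\<^sub>R A) $ i $ l) (at (t k))"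
        by (simp add: isCont_def)
      then show "((\<lambda>r. mexp ((s + (-1) * r) *\<^sub>R A) $ i $ l) \<longlongrightarrow> mexp ((s + (-1) * t k) *\<^sub>R A) $ i $ l) (at_right (t k))"
        by (rule tendsto_mono[OF at_within_le_at])
    qed
    moreover have "\<forall>\<^sub>F r in at_right (t k). g r = x s $ i"
      unfolding eventually_at_right[OF tk(1)] using eq tk by blast
    ultimately have "((\<lambda>r. x s $ i) \<longlongrightarrow> (\<Sum>l\<in>UNIV. mexp ((s + (-1) * t k) *\<^sub>R A) $ i $ l * (J *v x (t k)) $ l)) (at_right (t k))"
      by (rule Lim_transform_eventually)
    then have "x s $ i = (\<Sum>l\<in>UNIV. mexp ((s + (-1) * t k) *\<^sub>R A) $ i $ l * (J *v x (t k)) $ l)"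
      using tendsto_const_iff[OF trivial_limit_at_right_real] by blast
    then show ?thesis by (simp add: mv_comp)
  qed
  then show ?thesis by (simp add: vec_eq_iff)
qed



definition V :: "real^'n \<Rightarrow> real^'n \<Rightarrow> real" where "V lam z = (\<Sum>i\<in>UNIV. lam $ i * \<bar>z $ i\<bar>)"

lemma V_mat:
  fixes P :: "real^'n^'n"
  assumes P: "\<And>i j. 0 \<le> P $ i $ j" and l: "\<And>i. 0 \<le> lam $ i"
  shows "V lam (P *v z) \<le> (\<Sum>l\<in>UNIV. (lam v* P) $ l * \<bar>z $ l\<bar>)"
proof -
  have "V lam (P *v z) \<le> (\<Sum>i\<in>UNIV. lam $ i * (\<Sum>l\<in>UNIV. P $ i $ l * \<bar>z $ l\<bar>))"
    unfolding V_def mv_comp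
  proof (rule sum_mono, rule mult_left_mono)
    fix i
    show "\<bar>\<Sum>l\<in>UNIV. P $ i $ l * z $ l\<bar> \<le> (\<Sum>l\<in>UNIV. P $ i $ l * \<bar>z $ l\<bar>)"
      by (rule order_trans[OF sum_abs]) (simp add: abs_mult P)
    show "0 \<le> lam $ i" by (rule l)
  qed
  also have "\<dots> = (\<Sum>l\<in>UNIV. (lam v* P) $ l * \<bar>z $ l\<bar>)"
    unfolding vm_comp sum_distrib_left sum_distrib_right by (subst sum.swap) (simp add: mult_ac)
  finally show ?thesis .
qed

lemma V_nonneg: "(\<And>i. 0 \<le> lam $ i) \<Longrightarrow> 0 \<le> V lam z"
  unfolding V_def by (auto intro!: sum_nonneg)

lemma V_lower:
  assumes "pos_vec lam"
  shows "Min (range (\<lambda>i. lam $ i)) * norm z \<le> V lam z"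
proof -
  let ?m = "Min (range (\<lambda>i. lam $ i))"
  have mle: "?m \<le> lam $ i" for i by (rule Min_le) auto
  have m0: "0 \<le> ?m" using assms by (auto simp: pos_vec_def Min_ge_iff less_imp_le)
  have "?m * norm z \<le> ?m * (\<Sum>i\<in>UNIV. \<bar>z $ i\<bar>)"
    by (rule mult_left_mono[OF norm_le_l1_cart m0])
  also have "\<dots> = (\<Sum>i\<in>UNIV. ?m * \<bar>z $ i\<bar>)" by (simp add: sum_distrib_left)
  also have "\<dots> \<le> V lam z" unfolding V_def
    by (rule sum_mono) (simp add: mle mult_right_mono)
  finally show ?thesis .
qed

lemma V_J:
  fixes J :: "real^'n^'n"
  assumes J: "nonneg_matrix J" and lam: "pos_vec lam"
  shows "V lam (J *v z) \<le> (\<Sum>l\<in>UNIV. (lam v* J) $ l) * norm z"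
proof -
  have l0: "0 \<le> lam $ i" for i using lam by (simp add: pos_vec_def less_imp_le)
  have "V lam (J *v z) \<le> (\<Sum>l\<in>UNIV. (lam v* J) $ l * \<bar>z $ l\<bar>)"
    by (rule V_mat) (use J l0 in \<open>auto simp: nonneg_matrix_def\<close>)
  also have "\<dots> \<le> (\<Sum>l\<in>UNIV. (lam v* J) $ l * norm z)"
  proof (rule sum_mono, rule mult_left_mono)
    fix l show "\<bar>z $ l\<bar> \<le> norm z" by (rule component_le_norm_cart)
    show "0 \<le> (lam v* J) $ l" using J l0 by (auto simp: vm_comp nonneg_matrix_def intro!: sum_nonneg)
  qed
  also have "\<dots> = (\<Sum>l\<in>UNIV. (lam v* J) $ l) * norm z" by (simp add: sum_distrib_right)
  finally show ?thesis .
qed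

lemma sol_bounds:
  fixes A J :: "real^'n^'n"
  assumes A: "metzler A" and J: "nonneg_matrix J" and lam: "pos_vec lam"
    and nA: "\<And>j. (lam v* A) $ j < 0"
    and d0: "0 \<le> 1 - \<delta>"
    and d: "\<forall>\<theta>\<ge>T. \<forall>j. (lam v* (J ** mexp (\<theta> *\<^sub>R A))) $ j \<le> (1 - \<delta>) * lam $ j"
    and adm: "dwell_admissible T t" and sol: "impulsive_solution A J t x0 x" and T0: "0 \<le> T"
  shows "t k < s \<Longrightarrow> s \<le> t (Suc k) \<Longrightarrow>
    Min (range (\<lambda>i. lam $ i)) * norm (x s) \<le> (1 - \<delta>)^k * ((\<Sum>l\<in>UNIV. (lam v* J) $ l) * norm x0)"
proof -
  have l0: "0 \<le> lam $ i" for i using lam by (simp add: pos_vec_def less_imp_le)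
  have sm: "strict_mono t" and dw: "\<And>k. T \<le> t (Suc k) - t k"
    using adm unfolding dwell_admissible_def by auto
  have x0: "x (t 0) = x0" using sol unfolding impulsive_solution_def by auto
  have VE: "V lam (mexp (r *\<^sub>R A) *v y) \<le> V lam y" if "0 \<le> r" for r y
  proof -
    have "V lam (mexp (r *\<^sub>R A) *v y) \<le> (\<Sum>l\<in>UNIV. (lam v* mexp (r *\<^sub>R A)) $ l * \<bar>y $ l\<bar>)"
      by (rule V_mat) (use E_nonneg[OF A that] l0 in auto)
    also have "\<dots> \<le> V lam y" unfolding V_def
      by (rule sum_mono, rule mult_right_mono) (use row_E_le[OF A less_imp_le[OF nA] that] in auto)
    finally show ?thesis .
  qed
  have VJE: "V lam (J *v (mexp (\<theta> *\<^sub>R A) *v y)) \<le> (1 - \<delta>) * V lam y" if "T \<le> \<theta>" for \<theta> y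
  proof -
    have nn: "0 \<le> (J ** mexp (\<theta> *\<^sub>R A)) $ i $ j" for i j
    proof -
      have "0 \<le> \<theta>" using that T0 by linarith
      then show ?thesis using J E_nonneg[OF A]
        by (auto simp: matrix_matrix_mult_def nonneg_matrix_def intro!: sum_nonneg)
    qed
    have "V lam (J *v (mexp (\<theta> *\<^sub>R A) *v y)) = V lam ((J ** mexp (\<theta> *\<^sub>R A)) *v y)"
      by (simp add: matrix_vector_mul_assoc)
    also have "\<dots> \<le> (\<Sum>l\<in>UNIV. (lam v* (J ** mexp (\<theta> *\<^sub>R A))) $ l * \<bar>y $ l\<bar>)"
      by (rule V_mat) (use nn l0 in auto)
    also have "\<dots> \<le> (\<Sum>l\<in>UNIV. ((1 - \<delta>) * lam $ l) * \<bar>y $ l\<bar>)"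
      by (rule sum_mono, rule mult_right_mono) (use d that in auto)
    also have "\<dots> = (1 - \<delta>) * V lam y" by (simp add: V_def sum_distrib_left mult_ac)
    finally show ?thesis .
  qed
  define K where "K = (\<Sum>l\<in>UNIV. (lam v* J) $ l)"
  have Vy: "V lam (J *v x (t k)) \<le> (1 - \<delta>)^k * (K * norm x0)" for k
  proof (induction k)
    case 0 then show ?case using V_J[OF J lam, of "x (t 0)"] x0 by (simp add: K_def)
  next
    case (Suc k)
    have "t k < t (Suc k)" using sm by (simp add: strict_monoD)
    then have "x (t (Suc k)) = mexp ((t (Suc k) - t k) *\<^sub>R A) *v (J *v x (t k))"
      by (intro sol_formula[OF sol]) auto
    then have "V lam (J *v x (t (Suc k))) \<le> (1 - \<delta>) * V lam (J *v x (t k))"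
      using VJE[OF dw[of k]] by simp
    also have "\<dots> \<le> (1 - \<delta>) * ((1 - \<delta>)^k * (K * norm x0))"
      by (rule mult_left_mono[OF Suc d0])
    finally show ?case by (simp add: mult_ac)
  qed
  assume tk: "t k < s" "s \<le> t (Suc k)"
  have "Min (range (\<lambda>i. lam $ i)) * norm (x s) \<le> V lam (x s)" by (rule V_lower[OF lam])
  also have "\<dots> = V lam (mexp ((s - t k) *\<^sub>R A) *v (J *v x (t k)))"
    using sol_formula[OF sol tk] by simp
  also have "\<dots> \<le> V lam (J *v x (t k))" by (rule VE) (use tk in auto)
  also have "\<dots> \<le> (1 - \<delta>)^k * (K * norm x0)" by (rule Vy)
  finally show ?thesis by (simp add: K_def)
qed

lemma interval_exists:
  assumes adm: "dwell_admissible T t" and s: "t 0 < s"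
  shows "\<exists>k. t k < s \<and> s \<le> t (Suc k)"
proof -
  have "filterlim t at_top sequentially" using adm unfolding dwell_admissible_def by auto
  then have "\<forall>\<^sub>F n in sequentially. s \<le> t n" by (simp add: filterlim_at_top)
  then obtain n where n: "s \<le> t n" by (auto simp: eventually_sequentially)
  define n0 where "n0 = (LEAST n. s \<le> t n)"
  have n0: "s \<le> t n0" unfolding n0_def by (rule LeastI[of "\<lambda>n. s \<le> t n", OF n])
  have "n0 \<noteq> 0"
  proof
    assume "n0 = 0" then show False using n0 s by simp
  qed
  then obtain k where k: "n0 = Suc k" by (cases n0) auto
  have "\<not> s \<le> t k" using not_less_Least[of k "\<lambda>n. s \<le> t n"] k unfolding n0_def by auto
  then have "t k < s \<and> s \<le> t (Suc k)" using n0 k by auto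
  then show ?thesis by blast
qed

lemma k_bound:
  assumes adm: "dwell_admissible T t" and "t N < s" "t k < s" "s \<le> t (Suc k)"
  shows "N \<le> k"
proof (rule ccontr)
  assume "\<not> N \<le> k"
  then have "Suc k \<le> N" by simp
  moreover have "strict_mono t" using adm unfolding dwell_admissible_def by auto
  ultimately have "t (Suc k) \<le> t N" by (simp add: strict_mono_less_eq)
  then show False using assms by linarith
qed



lemma stab_from_c:
  fixes A J :: "real^'n^'n"
  assumes A: "metzler A" and J: "nonneg_matrix J" and Tp: "T > 0" and cc: "cond_c A J T"
  shows "asymp_stable_min_dwell A J T"
proof -
  obtain lam where l: "pos_vec lam" "\<And>j. (lam v* A) $ j < 0"
    "\<And>j. (lam v* (J ** mexp (T *\<^sub>R A))) $ j - lam $ j < 0"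
    using cc unfolding cond_c_def by blast
  obtain \<delta> where d: "\<delta> > 0" "\<delta> \<le> 1" "\<forall>\<theta>\<ge>T. \<forall>j. (lam v* (J ** mexp (\<theta> *\<^sub>R A))) $ j \<le> (1 - \<delta>) * lam $ j"
    using uniform_contr[OF A J l] by blast
  define m where "m = Min (range (\<lambda>i. lam $ i))"
  have mpos: "0 < m" unfolding m_def using l(1) by (auto simp: pos_vec_def Min_gr_iff)
  define K where "K = (\<Sum>l\<in>UNIV. (lam v* J) $ l)"
  have K0: "0 \<le> K" unfolding K_def using J l(1)
    by (auto simp: vm_comp nonneg_matrix_def pos_vec_def less_imp_le intro!: sum_nonneg)
  have d0: "0 \<le> 1 - \<delta>" "1 - \<delta> \<le> 1" "1 - \<delta> < 1" using d by auto
  have bound: "m * norm (x s) \<le> (1 - \<delta>)^k * (K * norm x0)"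
    if "dwell_admissible T t" "impulsive_solution A J t x0 x" "t k < s" "s \<le> t (Suc k)" for t x0 x k s
    using sol_bounds[OF A J l(1) l(2) d0(1) d(3) that(1,2) less_imp_le[OF Tp] that(3,4)]
    by (simp add: m_def K_def)
  show ?thesis unfolding asymp_stable_min_dwell_def GAS_impulsive_def
  proof (intro allI impI, rule conjI)
    fix t :: "nat \<Rightarrow> real" assume adm: "dwell_admissible T t"
    have sm: "strict_mono t" using adm unfolding dwell_admissible_def by auto
    show "\<forall>\<epsilon>>0. \<exists>\<delta>'>0. \<forall>x0 x. norm x0 < \<delta>' \<and> impulsive_solution A J t x0 x \<longrightarrow> (\<forall>s\<ge>t 0. norm (x s) < \<epsilon>)"
    proof (intro allI impI)
      fix \<epsilon> :: real assume ep: "\<epsilon> > 0"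
      define \<delta>' where "\<delta>' = min \<epsilon> (\<epsilon> * m / (K + 1))"
      have dp: "\<delta>' > 0" unfolding \<delta>'_def using ep mpos K0 by auto
      have em: "0 < \<epsilon> * m" using ep mpos by simp
      have key: "K * (\<epsilon> * m / (K + 1)) < \<epsilon> * m"
      proof -
        have "K * (\<epsilon> * m / (K + 1)) = (\<epsilon> * m) * (K / (K + 1))" by simp
        also have "\<dots> < (\<epsilon> * m) * 1"
          by (rule mult_strict_left_mono[OF _ em]) (use K0 in simp)
        finally show ?thesis by simp
      qed
      have "norm (x s) < \<epsilon>" if h: "norm x0 < \<delta>'" "impulsive_solution A J t x0 x" "s \<ge> t 0" for x0 x s
      proof (cases "s = t 0")
        case True
        then have "x s = x0" using h(2) unfolding impulsive_solution_def by simp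
        then show ?thesis using h(1) by (simp add: \<delta>'_def)
      next
        case False
        then have "t 0 < s" using h(3) by simp
        then obtain k where k: "t k < s" "s \<le> t (Suc k)" using interval_exists[OF adm] by blast
        have "m * norm (x s) \<le> (1 - \<delta>)^k * (K * norm x0)" by (rule bound[OF adm h(2) k])
        also have "\<dots> \<le> K * norm x0"
          by (rule mult_left_le_one_le) (use K0 d0 in \<open>auto intro: power_le_one\<close>)
        also have "\<dots> \<le> K * (\<epsilon> * m / (K + 1))"
          by (rule mult_left_mono[OF _ K0]) (use h(1) in \<open>simp add: \<delta>'_def\<close>)
        also have "\<dots> < \<epsilon> * m" by (rule key)
        finally have "m * norm (x s) < m * \<epsilon>" by (simp add: mult.commute)
        then show ?thesis using mpos by simp
      qed
      then show "\<exists>\<delta>'>0. \<forall>x0 x. norm x0 < \<delta>' \<and> impulsive_solution A J t x0 x \<longrightarrow> (\<forall>s\<ge>t 0. norm (x s) < \<epsilon>)"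
        using dp by blast
    qed
    show "\<forall>x0 x. impulsive_solution A J t x0 x \<longrightarrow> (x \<longlongrightarrow> 0) at_top"
    proof (intro allI impI)
      fix x0 and x :: "real \<Rightarrow> real^'n" assume sol: "impulsive_solution A J t x0 x"
      show "(x \<longlongrightarrow> 0) at_top"
        unfolding tendsto_iff
      proof (intro allI impI)
        fix e :: real assume e: "e > 0"
        have "0 < e * m / (K * norm x0 + 1)" using e mpos K0 by (auto intro!: divide_pos_pos add_nonneg_pos)
        then obtain N where N: "(1 - \<delta>)^N < e * m / (K * norm x0 + 1)"
          using real_arch_pow_inv[OF _ d0(3)] by blast
        have N': "(1 - \<delta>)^N * (K * norm x0 + 1) < e * m"
          using N K0 by (simp add: less_divide_eq add_nonneg_pos)
        have "\<forall>\<^sub>F s in at_top. t N < s" by (rule eventually_gt_at_top)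
        then show "\<forall>\<^sub>F s in at_top. dist (x s) 0 < e"
        proof (rule eventually_mono)
          fix s assume s: "t N < s"
          have "t 0 \<le> t N" using sm by (simp add: strict_mono_less_eq)
          then have "t 0 < s" using s by simp
          then obtain k where k: "t k < s" "s \<le> t (Suc k)" using interval_exists[OF adm] by blast
          have Nk: "N \<le> k" by (rule k_bound[OF adm s k])
          have "m * norm (x s) \<le> (1 - \<delta>)^k * (K * norm x0)" by (rule bound[OF adm sol k])
          also have "\<dots> \<le> (1 - \<delta>)^N * (K * norm x0)"
            by (rule mult_right_mono[OF power_decreasing[OF Nk d0(1,2)]]) (use K0 in simp)
          also have "\<dots> \<le> (1 - \<delta>)^N * (K * norm x0 + 1)"
            by (rule mult_left_mono) (use d0 in auto)
          also have "\<dots> < e * m" by (rule N')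
          finally have "m * norm (x s) < m * e" by (simp add: mult.commute)
          then show "dist (x s) 0 < e" using mpos by simp
        qed
      qed
    qed
  qed
qed

theorem theorem3:
  fixes A J :: "real^'n^'n" and Tbar :: real
  assumes "metzler A" and "nonneg_matrix J" and "Tbar > 0"
  shows "(cond_a A J Tbar \<longleftrightarrow> cond_b A J Tbar) \<and>
         (cond_b A J Tbar \<longleftrightarrow> cond_c A J Tbar) \<and>
         (cond_c A J Tbar \<longleftrightarrow> cond_d A J Tbar) \<and>
         (cond_d A J Tbar \<longleftrightarrow> cond_e A J Tbar) \<and>
         (cond_e A J Tbar \<longleftrightarrow> cond_f A J Tbar) \<and>
         (cond_f A J Tbar \<longleftrightarrow> cond_g A J Tbar) \<and>
         ((cond_a A J Tbar \<or> cond_b A J Tbar \<or> cond_c A J Tbar \<or> cond_d A J Tbar \<or>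
           cond_e A J Tbar \<or> cond_f A J Tbar \<or> cond_g A J Tbar) \<longrightarrow>
          asymp_stable_min_dwell A J Tbar)"
proof -
  have ab: "cond_a A J Tbar \<longleftrightarrow> cond_b A J Tbar"
    using a_imp_b c_imp_a[OF assms(1,2)] b_imp_c by blast
  have bc: "cond_b A J Tbar \<longleftrightarrow> cond_c A J Tbar"
    using c_imp_b[OF assms(1,2)] b_imp_c by blast
  have cd: "cond_c A J Tbar \<longleftrightarrow> cond_d A J Tbar" by (rule c_iff_d)
  have de: "cond_d A J Tbar \<longleftrightarrow> cond_e A J Tbar" using d_imp_e e_imp_d by blast
  have cf: "cond_c A J Tbar \<longleftrightarrow> cond_f A J Tbar"
    using c_imp_f f_imp_c[OF assms(1,3)] by blast
  have fg: "cond_f A J Tbar \<longleftrightarrow> cond_g A J Tbar" using f_imp_g g_imp_f by blast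
  have st: "cond_c A J Tbar \<Longrightarrow> asymp_stable_min_dwell A J Tbar"
    by (rule stab_from_c[OF assms])
  show ?thesis using ab bc cd de cf fg st by blast
qed


end
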